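(* Let $(X,d)$ be a compact metric space and $f_{1,\infty}=\{f_n\}$ a sequence of continuous surjective maps $f_n:X\to X$ converging uniformly to $f:X\to X$, such that $\{f_n^k\}_{k\in\mathbb{N}}$ converges collectively to $\{f^k\}_{k\in\mathbb{N}}$ and $f_{1,\infty}$ is feebly open. Then $(X,f_{1,\infty})$ is strongly multi-sensitive if and only if $(X,f)$ is strongly multi-sensitive; and $(X,f_{1,\infty})$ is $\mathcal{N}$-sensitive if and only if $(X,f)$ is $\mathcal{N}$-sensitive.
   Context: Write $f_i^n=f_{n+i-1}\circ\cdots\circ f_i$, $f_i^0=\mathrm{id}$; an autonomous system $(X,f)$ is the case $f_n=f$ for all $n$ (so $f_i^n=f^n$). Collective convergence: for every $\epsilon>0$ there is $N_0\in\mathbb{N}$ such that $D(f_N^k,f^k)<\epsilon$ for all $N\ge N_0$ and all $k\in\mathbb{N}$, where $D$ is the supremum metric on continuous self-maps of $X$. Feebly open: $\mathrm{int}(f_n(U))\ne\varnothing$ for every nonempty open $U\subseteq X$ and every $n$. $f_{1,\infty}^{[k]}=\{f^k_{k(n-1)+1}\}_{n=1}^\infty$ (its $n$-fold composition from index $1$ is $f_1^{kn}$). $N_{f_{1,\infty}}(V,\delta)=\{n\in\mathbb{N}:\exists u,v\in V,\ d(f_1^n(u),f_1^n(v))>\delta\}$. For $\mathbf{v}=(v_1,\dots,v_r)\in\mathbb{N}^r$, the system is multi-sensitive with respect to $\mathbf{v}$ if there is $\delta>0$ such that $\bigcap_{i=1}^r N_{f_{1,\infty}^{[v_i]}}(U_i,\delta)\ne\varnothing$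 for all nonempty open $U_1,\dots,U_r$; $\mathcal{N}$-sensitive if multi-sensitive with respect to $(1,\dots,n)$ for every $n$; strongly multi-sensitive if multi-sensitive with respect to every vector in $\mathbb{N}^r$, for every $r$. *)

theory Defs
  imports "HOL-Analysis.Analysis"
begin

text \<open>Nonautonomous compositions, indexed from 1:
  ncomp fs i n = f_{i+n-1} o ... o f_i,  ncomp fs i 0 = id.\<close>
fun ncomp :: "(nat \<Rightarrow> 'a \<Rightarrow> 'a) \<Rightarrow> nat \<Rightarrow> nat \<Rightarrow> 'a \<Rightarrow> 'a" where
  "ncomp fs i 0 = id"
| "ncomp fs i (Suc n) = fs (i + n) \<circ> ncomp fs i n"

definition supdist :: "'a::metric_space set \<Rightarrow> ('a \<Rightarrow> 'a) \<Rightarrow> ('a \<Rightarrow> 'a) \<Rightarrow> real" where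
  "supdist X g h = (SUP x\<in>X. dist (g x) (h x))"

definition Nset :: "(nat \<Rightarrow> 'a::metric_space \<Rightarrow> 'a) \<Rightarrow> 'a set \<Rightarrow> real \<Rightarrow> nat set" where
  "Nset F V \<delta> = {n. n \<ge> 1 \<and> (\<exists>u\<in>V. \<exists>v\<in>V. dist (F n u) (F n v) > \<delta>)}"

text \<open>Multi-sensitivity w.r.t. a vector vs (entries positive); F n is the n-fold
  composition from index 1, so the k-th power system f^[k] has n-fold composition F (k*n).\<close>
definition multi_sensitive :: "'a::metric_space set \<Rightarrow> (nat \<Rightarrow> 'a \<Rightarrow> 'a) \<Rightarrow> nat list \<Rightarrow> bool" where
  "multi_sensitive X F vs \<longleftrightarrow>
     (\<exists>\<delta>>0. \<forall>Us::'a set list. length Us = length vs \<longrightarrow>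
        (\<forall>U\<in>set Us. openin (top_of_set X) U \<and> U \<noteq> {}) \<longrightarrow>
        (\<Inter>i<length vs. Nset (\<lambda>n. F (vs ! i * n)) (Us ! i) \<delta>) \<noteq> {})"

definition strongly_multi_sensitive :: "'a::metric_space set \<Rightarrow> (nat \<Rightarrow> 'a \<Rightarrow> 'a) \<Rightarrow> bool" where
  "strongly_multi_sensitive X F \<longleftrightarrow>
     (\<forall>vs. vs \<noteq> [] \<longrightarrow> (\<forall>k\<in>set vs. k \<ge> 1) \<longrightarrow> multi_sensitive X F vs)"

definition N_sensitive :: "'a::metric_space set \<Rightarrow> (nat \<Rightarrow> 'a \<Rightarrow> 'a) \<Rightarrow> bool" where
  "N_sensitive X F \<longleftrightarrow> (\<forall>n\<ge>1. multi_sensitive X F [1..<n+1])"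

definition feebly_open :: "'a::metric_space set \<Rightarrow> (nat \<Rightarrow> 'a \<Rightarrow> 'a) \<Rightarrow> bool" where
  "feebly_open X fs \<longleftrightarrow>
     (\<forall>n\<ge>1. \<forall>U. openin (top_of_set X) U \<and> U \<noteq> {} \<longrightarrow>
        (top_of_set X) interior_of (fs n ` U) \<noteq> {})"

end

theory Submission
  imports Defs
begin

lemma ncomp_add: "ncomp fs i (m + k) = ncomp fs (i + m) k \<circ> ncomp fs i m"
  by (induction k) (auto simp: add.assoc)

lemma ncomp_props:
  assumes C1: "\<forall>n\<ge>1. continuous_on X (fs n) \<and> fs n ` X = X" and i: "i \<ge> 1"
  shows "continuous_on X (ncomp fs i k) \<and> ncomp fs i k ` X = X"
proof (induction k)
  case 0 then show ?case by (simp add: continuous_on_id)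
next
  case (Suc k)
  have c: "continuous_on X (fs (i+k)) \<and> fs (i+k) ` X = X" using C1 i by simp
  have e: "ncomp fs i (Suc k) = fs (i+k) \<circ> ncomp fs i k" by simp
  have "continuous_on X (fs (i+k) \<circ> ncomp fs i k)"
    using continuous_on_compose[of X "ncomp fs i k" "fs(i+k)"] Suc c by simp
  moreover have "(fs (i+k) \<circ> ncomp fs i k) ` X = X" using Suc c by (metis image_comp)
  ultimately show ?case using e by simp
qed

lemma funpow_props:
  assumes "continuous_on X f" "f ` X = X"
  shows "continuous_on X (f ^^ k) \<and> (f ^^ k) ` X = X"
proof (induction k)
  case 0 then show ?case by (simp add: continuous_on_id)
next
  case (Suc k)
  have e: "f ^^ (Suc k) = f \<circ> f ^^ k" by simp
  have "continuous_on X (f \<circ> f ^^ k)"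
    using continuous_on_compose[of X "f ^^ k" f] Suc assms by simp
  moreover have "(f \<circ> f ^^ k) ` X = X" using Suc assms by (metis image_comp)
  ultimately show ?case using e by metis
qed

lemma shrink:
  fixes g :: "nat \<Rightarrow> 'a::metric_space \<Rightarrow> 'b::metric_space"
  assumes g: "\<forall>j\<le>M. continuous_on X (g j)" and V: "openin (top_of_set X) V" "V \<noteq> {}"
    and e: "\<epsilon> > 0"
  shows "\<exists>V'. openin (top_of_set X) V' \<and> V' \<noteq> {} \<and> V' \<subseteq> V \<and>
           (\<forall>j\<le>M. \<forall>u\<in>V'. \<forall>w\<in>V'. dist (g j u) (g j w) \<le> \<epsilon>)"
proof -
  obtain x where x: "x \<in> V" using V by blast
  have VX: "V \<subseteq> X" using V openin_subset by fastforce
  have xX: "x \<in> X" using x VX by blast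
  have "\<exists>d>0. \<forall>j\<le>M'. \<forall>y\<in>X. dist y x < d \<longrightarrow> dist (g j y) (g j x) < \<epsilon>/2" if "M' \<le> M" for M'
    using that
  proof (induction M')
    case 0
    then obtain d where "d>0" "\<forall>y\<in>X. dist y x < d \<longrightarrow> dist (g 0 y) (g 0 x) < \<epsilon>/2"
    proof -
      have "continuous_on X (g 0)" using g by simp
      moreover have "\<epsilon>/2 > 0" using e by simp
      ultimately show ?thesis using that xX unfolding continuous_on_iff by blast
    qed
    then show ?case by auto
  next
    case (Suc M')
    then obtain d where d: "d>0" "\<forall>j\<le>M'. \<forall>y\<in>X. dist y x < d \<longrightarrow> dist (g j y) (g j x) < \<epsilon>/2"
      by auto
    obtain d' where d': "d'>0" "\<forall>y\<in>X. dist y x < d' \<longrightarrow> dist (g (Suc M') y) (g (Suc M') x) < \<epsilon>/2"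
    proof -
      have "continuous_on X (g (Suc M'))" using g Suc.prems by simp
      moreover have "\<epsilon>/2 > 0" using e by simp
      ultimately show ?thesis using that xX unfolding continuous_on_iff by blast
    qed
    show ?case
      apply (rule exI[of _ "min d d'"])
      using d d' by (auto simp: le_Suc_eq)
  qed
  then obtain d where d: "d>0" "\<forall>j\<le>M. \<forall>y\<in>X. dist y x < d \<longrightarrow> dist (g j y) (g j x) < \<epsilon>/2"
    by blast
  have "openin (top_of_set X) (X \<inter> ball x d)" by (rule openin_open_Int) simp
  then have op: "openin (top_of_set X) (V \<inter> (X \<inter> ball x d))"
    using openin_Int[OF V(1)] by blast
  have eq: "V \<inter> (X \<inter> ball x d) = V \<inter> ball x d" using VX by blast
  show ?thesis
  proof (intro exI[of _ "V \<inter> ball x d"] conjI allI impI ballI)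
    show "openin (top_of_set X) (V \<inter> ball x d)" using op eq by simp
    show "V \<inter> ball x d \<noteq> {}" using x d by auto
    show "V \<inter> ball x d \<subseteq> V" by blast
    fix j u w assume j: "j \<le> M" and u: "u \<in> V \<inter> ball x d" and w: "w \<in> V \<inter> ball x d"
    have "dist (g j u) (g j x) < \<epsilon>/2" using d j u VX by (auto simp: dist_commute)
    moreover have "dist (g j w) (g j x) < \<epsilon>/2" using d j w VX by (auto simp: dist_commute)
    moreover have "dist (g j u) (g j w) \<le> dist (g j u) (g j x) + dist (g j w) (g j x)"
      by (rule dist_triangle2)
    ultimately show "dist (g j u) (g j w) \<le> \<epsilon>" by linarith
  qed
qed

lemma f_cont:
  fixes fs :: "nat \<Rightarrow> 'a::metric_space \<Rightarrow> 'a"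
  assumes C1: "\<forall>n\<ge>1. continuous_on X (fs n) \<and> fs n ` X = X"
    and U: "\<forall>e>0. \<exists>N0. \<forall>n\<ge>N0. n \<ge> 1 \<longrightarrow> (\<forall>x\<in>X. dist (fs n x) (f x) < e)"
  shows "continuous_on X f"
  unfolding continuous_on_iff
proof (intro ballI allI impI)
  fix x and \<epsilon> :: real assume x: "x \<in> X" and e: "\<epsilon> > 0"
  have e3: "\<epsilon>/3 > 0" using e by simp
  obtain N0 where N0: "\<forall>n\<ge>N0. n \<ge> 1 \<longrightarrow> (\<forall>x\<in>X. dist (fs n x) (f x) < \<epsilon>/3)"
    using U e3 by blast
  define n where "n = max N0 1"
  have "n \<ge> N0" "n \<ge> 1" by (auto simp: n_def max_def)
  then have n: "\<forall>x\<in>X. dist (fs n x) (f x) < \<epsilon>/3" using N0 by blast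
  have "continuous_on X (fs n)" using C1 n_def by auto
  then obtain d where d: "d>0" "\<forall>x'\<in>X. dist x' x < d \<longrightarrow> dist (fs n x') (fs n x) < \<epsilon>/3"
    using x e3 unfolding continuous_on_iff by blast
  show "\<exists>d>0. \<forall>x'\<in>X. dist x' x < d \<longrightarrow> dist (f x') (f x) < \<epsilon>"
  proof (intro exI[of _ d] conjI ballI impI)
    show "d > 0" by (rule d)
    fix x' assume x': "x' \<in> X" "dist x' x < d"
    have a: "dist (fs n x') (f x') < \<epsilon>/3" using n x' by blast
    have b: "dist (fs n x) (f x) < \<epsilon>/3" using n x by blast
    have c: "dist (fs n x') (fs n x) < \<epsilon>/3" using d x' by blast
    have "dist (f x') (f x) \<le> dist (f x') (fs n x') + dist (fs n x') (f x)" by (rule dist_triangle)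
    moreover have "dist (fs n x') (f x) \<le> dist (fs n x') (fs n x) + dist (fs n x) (f x)" by (rule dist_triangle)
    ultimately show "dist (f x') (f x) < \<epsilon>" using a b c by (simp add: dist_commute)
  qed
qed

lemma f_surj:
  fixes fs :: "nat \<Rightarrow> 'a::metric_space \<Rightarrow> 'a"
  assumes X: "compact X" and C1: "\<forall>n\<ge>1. continuous_on X (fs n) \<and> fs n ` X = X"
    and fX: "f ` X \<subseteq> X"
    and U: "\<forall>e>0. \<exists>N0. \<forall>n\<ge>N0. n \<ge> 1 \<longrightarrow> (\<forall>x\<in>X. dist (fs n x) (f x) < e)"
  shows "f ` X = X"
proof
  show "f ` X \<subseteq> X" by (rule fX)
  have cf: "continuous_on X f" using f_cont[OF C1 U] .
  have cl: "closed (f ` X)" using compact_continuous_image[OF cf X] compact_imp_closed by blast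
  show "X \<subseteq> f ` X"
  proof
    fix y assume y: "y \<in> X"
    have "y \<in> closure (f ` X)" unfolding closure_approachable
    proof (intro allI impI)
      fix e :: real assume e: "e > 0"
      obtain N0 where N0: "\<forall>n\<ge>N0. n \<ge> 1 \<longrightarrow> (\<forall>x\<in>X. dist (fs n x) (f x) < e)"
        using U e by blast
      define n where "n = max N0 1"
      have "n \<ge> N0" "n \<ge> 1" by (auto simp: n_def max_def)
      then have n: "\<forall>x\<in>X. dist (fs n x) (f x) < e" using N0 by blast
      have "fs n ` X = X" using C1 n_def by auto
      then obtain x where x: "x \<in> X" "y = fs n x" using y by blast
      show "\<exists>z\<in>f ` X. dist z y < e" using x n by (auto simp: dist_commute)
    qed
    then show "y \<in> f ` X" using cl by (simp add: closure_closed)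
  qed
qed

lemma coll_pt:
  fixes fs :: "nat \<Rightarrow> 'a::metric_space \<Rightarrow> 'a"
  assumes X: "compact X" and C1: "\<forall>n\<ge>1. continuous_on X (fs n) \<and> fs n ` X = X"
    and fX: "f ` X = X" and N: "N \<ge> 1"
    and S: "supdist X (ncomp fs N k) (f ^^ k) < e" and x: "x \<in> X"
  shows "dist (ncomp fs N k x) ((f ^^ k) x) < e"
proof -
  have "bounded X" by (rule compact_imp_bounded[OF X])
  then obtain B where B: "\<forall>a\<in>X. \<forall>b\<in>X. dist a b \<le> B"
    unfolding bounded_two_points by blast
  have i1: "ncomp fs N k ` X = X" using ncomp_props[OF C1 N] by blast
  have i2: "(f ^^ k) ` X = X"
  proof (induction k)
    case 0 then show ?case by simp
  next
    case (Suc k) then show ?case using fX by (metis funpow.simps(2) image_comp)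
  qed
  have "dist (ncomp fs N k y) ((f ^^ k) y) \<le> B" if y: "y \<in> X" for y
  proof -
    have "ncomp fs N k y \<in> X" using i1 y by blast
    moreover have "(f ^^ k) y \<in> X" using i2 y by blast
    ultimately show ?thesis using B by blast
  qed
  then have "bdd_above ((\<lambda>x. dist (ncomp fs N k x) ((f ^^ k) x)) ` X)"
    by (intro bdd_aboveI2) 
  then have "dist (ncomp fs N k x) ((f ^^ k) x) \<le> supdist X (ncomp fs N k) (f ^^ k)"
    unfolding supdist_def using x by (rule cSUP_upper[rotated])
  then show ?thesis using S by linarith
qed

lemma feeb_iter:
  assumes FO: "feebly_open X fs" and U: "openin (top_of_set X) U" "U \<noteq> {}"
  shows "(top_of_set X) interior_of (ncomp fs 1 k ` U) \<noteq> {}"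
proof (induction k)
  case 0
  then show ?case using U by (simp add: interior_of_openin)
next
  case (Suc k)
  let ?W = "(top_of_set X) interior_of (ncomp fs 1 k ` U)"
  have W: "openin (top_of_set X) ?W" by (rule openin_interior_of)
  have FO': "\<forall>n\<ge>1. \<forall>U. openin (top_of_set X) U \<and> U \<noteq> {} \<longrightarrow>
        (top_of_set X) interior_of (fs n ` U) \<noteq> {}" using FO unfolding feebly_open_def .
  have "(top_of_set X) interior_of (fs (Suc k) ` ?W) \<noteq> {}"
    using FO'[rule_format, of "Suc k" ?W] W Suc.IH by simp
  moreover have "fs (Suc k) ` ?W \<subseteq> ncomp fs 1 (Suc k) ` U"
    using interior_of_subset by fastforce
  ultimately show ?case using interior_of_mono by blast
qed

lemma dir1:
  fixes X :: "'a::metric_space set" and fs :: "nat \<Rightarrow> 'a \<Rightarrow> 'a" and f :: "'a \<Rightarrow> 'a"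
  assumes C1: "\<forall>n\<ge>1. continuous_on X (fs n) \<and> fs n ` X = X"
    and cf: "continuous_on X f" "f ` X = X"
    and coll: "\<forall>e>0. \<exists>s. \<forall>k. \<forall>x\<in>X. dist (ncomp fs (Suc s) k x) ((f^^k) x) < e"
    and FO: "feebly_open X fs"
    and ms: "multi_sensitive X (\<lambda>n. f^^n) vs"
  shows "multi_sensitive X (ncomp fs 1) vs"
proof -
  from ms obtain \<delta> where d0: "\<delta> > 0" and H: "\<forall>Us::'a set list. length Us = length vs \<longrightarrow>
        (\<forall>U\<in>set Us. openin (top_of_set X) U \<and> U \<noteq> {}) \<longrightarrow>
        (\<Inter>i<length vs. Nset (\<lambda>n. f^^(vs ! i * n)) (Us ! i) \<delta>) \<noteq> {}"
    unfolding multi_sensitive_def by blast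
  have d4: "\<delta>/4 > 0" using d0 by simp
  obtain s where cs: "\<forall>k. \<forall>x\<in>X. dist (ncomp fs (Suc s) k x) ((f^^k) x) < \<delta>/4"
    using coll d4 by blast
  have fk: "\<And>k. continuous_on X (f^^k) \<and> (f^^k) ` X = X" using funpow_props[OF cf] by blast
  have nk: "\<And>k. continuous_on X (ncomp fs 1 k) \<and> (ncomp fs 1 k) ` X = X"
    using ncomp_props[OF C1] by blast
  show ?thesis unfolding multi_sensitive_def
  proof (intro exI[of _ "\<delta>/2"] conjI allI impI)
    show "\<delta>/2 > 0" using d0 by simp
    fix Us :: "'a set list" assume len: "length Us = length vs"
      and op: "\<forall>U\<in>set Us. openin (top_of_set X) U \<and> U \<noteq> {}"
    let ?W = "\<lambda>i. (top_of_set X) interior_of (ncomp fs 1 s ` (Us!i))"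
    have "\<forall>i\<in>{..<length vs}. \<exists>V. openin (top_of_set X) V \<and> V \<noteq> {} \<and> V \<subseteq> X \<inter> (f^^s) -` ?W i
       \<and> (\<forall>j\<le>s. \<forall>u\<in>V. \<forall>w\<in>V. dist ((f^^j) u) ((f^^j) w) \<le> \<delta>)"
    proof (intro ballI)
      fix i assume "i \<in> {..<length vs}"
      then have i: "i < length vs" by simp
      have "Us!i \<in> set Us" using len i by simp
      then have Ui: "openin (top_of_set X) (Us!i)" "Us!i \<noteq> {}" using op by blast+
      have W1: "openin (top_of_set X) (?W i)" by (rule openin_interior_of)
      have W2: "?W i \<noteq> {}" using feeb_iter[OF FO Ui] .
      have WX: "?W i \<subseteq> X" using interior_of_subset_topspace by fastforce
      have V1: "openin (top_of_set X) (X \<inter> (f^^s) -` ?W i)"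
      proof -
        have c1: "continuous_on X (f^^s)" and c2: "(f^^s) \<in> X \<rightarrow> X" using fk[of s] by auto
        show ?thesis by (rule continuous_openin_preimage[OF c1 c2 W1])
      qed
      have V2: "X \<inter> (f^^s) -` ?W i \<noteq> {}"
      proof -
        obtain y where "y \<in> ?W i" using W2 by blast
        then have "y \<in> (f^^s) ` X" using WX fk[of s] by auto
        then obtain x where "x \<in> X" "(f^^s) x = y" by auto
        then show ?thesis using \<open>y \<in> ?W i\<close> by blast
      qed
      show "\<exists>V. openin (top_of_set X) V \<and> V \<noteq> {} \<and> V \<subseteq> X \<inter> (f^^s) -` ?W i
       \<and> (\<forall>j\<le>s. \<forall>u\<in>V. \<forall>w\<in>V. dist ((f^^j) u) ((f^^j) w) \<le> \<delta>)"
        using shrink[of s X "\<lambda>j. f^^j", OF _ V1 V2 d0] fk by blast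
    qed
    from bchoice[OF this] obtain Vf where Vf0: "\<forall>i\<in>{..<length vs}. openin (top_of_set X) (Vf i) \<and> Vf i \<noteq> {}
       \<and> Vf i \<subseteq> X \<inter> (f^^s) -` ?W i
       \<and> (\<forall>j\<le>s. \<forall>u\<in>Vf i. \<forall>w\<in>Vf i. dist ((f^^j) u) ((f^^j) w) \<le> \<delta>)" by blast
    have Vf: "\<And>i. i<length vs \<Longrightarrow> openin (top_of_set X) (Vf i) \<and> Vf i \<noteq> {}
       \<and> Vf i \<subseteq> X \<inter> (f^^s) -` ?W i
       \<and> (\<forall>j\<le>s. \<forall>u\<in>Vf i. \<forall>w\<in>Vf i. dist ((f^^j) u) ((f^^j) w) \<le> \<delta>)"
      using Vf0 by simp
    define Us' where "Us' = map Vf [0..<length vs]"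
    have l': "length Us' = length vs" by (simp add: Us'_def)
    have o': "\<forall>U\<in>set Us'. openin (top_of_set X) U \<and> U \<noteq> {}" using Vf by (auto simp: Us'_def)
    obtain n where n: "n \<in> (\<Inter>i<length vs. Nset (\<lambda>n. f^^(vs ! i * n)) (Us' ! i) \<delta>)"
      using H l' o' by blast
    have "n \<in> (\<Inter>i<length vs. Nset (\<lambda>n. ncomp fs 1 (vs ! i * n)) (Us ! i) (\<delta>/2))"
    proof (rule INT_I)
      fix i assume "i \<in> {..<length vs}"
      then have i: "i < length vs" by simp
      have Ui': "Us'!i = Vf i" using i by (simp add: Us'_def)
      have "n \<in> Nset (\<lambda>n. f^^(vs!i*n)) (Us'!i) \<delta>" using n i by blast
      then have n1: "n \<ge> 1" and "\<exists>u\<in>Vf i. \<exists>w\<in>Vf i. dist ((f^^(vs!i*n)) u) ((f^^(vs!i*n)) w) > \<delta>"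
        unfolding Nset_def using Ui' by auto
      then obtain u w where u: "u \<in> Vf i" and w: "w \<in> Vf i"
        and far: "dist ((f^^(vs!i*n)) u) ((f^^(vs!i*n)) w) > \<delta>" by blast
      have big: "vs!i*n > s"
      proof (rule ccontr)
        assume "\<not> s < vs!i*n"
        then have "dist ((f^^(vs!i*n)) u) ((f^^(vs!i*n)) w) \<le> \<delta>" using Vf[OF i] u w by auto
        then show False using far by linarith
      qed
      define m where "m = vs!i*n - s"
      have vm: "vs!i*n = m + s" using big m_def by simp
      have ua: "(f^^s) u \<in> ?W i" and wa: "(f^^s) w \<in> ?W i" using Vf[OF i] u w by auto
      have Wsub: "?W i \<subseteq> ncomp fs 1 s ` (Us!i)" by (rule interior_of_subset)
      obtain u' where u': "u' \<in> Us!i" "(f^^s) u = ncomp fs 1 s u'" using ua Wsub by auto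
      obtain w' where w': "w' \<in> Us!i" "(f^^s) w = ncomp fs 1 s w'" using wa Wsub by auto
      have aX: "(f^^s) u \<in> X" and bX: "(f^^s) w \<in> X" using ua wa interior_of_subset_topspace by fastforce+
      have e1: "(f^^(vs!i*n)) u = (f^^m) ((f^^s) u)" by (simp add: vm funpow_add)
      have e2: "(f^^(vs!i*n)) w = (f^^m) ((f^^s) w)" by (simp add: vm funpow_add)
      have e3: "ncomp fs 1 (vs!i*n) u' = ncomp fs (Suc s) m ((f^^s) u)"
        using ncomp_add[of fs 1 s m] u'(2) vm by (simp add: add.commute)
      have e4: "ncomp fs 1 (vs!i*n) w' = ncomp fs (Suc s) m ((f^^s) w)"
        using ncomp_add[of fs 1 s m] w'(2) vm by (simp add: add.commute)
      let ?P = "ncomp fs 1 (vs!i*n) u'" and ?Q = "ncomp fs 1 (vs!i*n) w'"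
      let ?A = "(f^^(vs!i*n)) u" and ?B = "(f^^(vs!i*n)) w"
      have "dist (ncomp fs (Suc s) m ((f^^s) u)) ((f^^m) ((f^^s) u)) < \<delta>/4" using cs aX by blast
      then have dA: "dist ?P ?A < \<delta>/4" using e1 e3 by simp
      have "dist (ncomp fs (Suc s) m ((f^^s) w)) ((f^^m) ((f^^s) w)) < \<delta>/4" using cs bX by blast
      then have dB: "dist ?Q ?B < \<delta>/4" using e2 e4 by simp
      have t1: "dist ?A ?B \<le> dist ?A ?P + dist ?P ?B" by (rule dist_triangle)
      have t2: "dist ?P ?B \<le> dist ?P ?Q + dist ?Q ?B" by (rule dist_triangle)
      have "dist ?P ?Q > \<delta>/2" using t1 t2 dA dB far by (simp add: dist_commute)
      then show "n \<in> Nset (\<lambda>n. ncomp fs 1 (vs ! i * n)) (Us ! i) (\<delta>/2)"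
        unfolding Nset_def using n1 u'(1) w'(1) by auto
    qed
    then show "(\<Inter>i<length vs. Nset (\<lambda>n. ncomp fs 1 (vs ! i * n)) (Us ! i) (\<delta>/2)) \<noteq> {}"
      by blast
  qed
qed

lemma dir2:
  fixes X :: "'a::metric_space set" and fs :: "nat \<Rightarrow> 'a \<Rightarrow> 'a" and f :: "'a \<Rightarrow> 'a"
  assumes C1: "\<forall>n\<ge>1. continuous_on X (fs n) \<and> fs n ` X = X"
    and cf: "continuous_on X f" "f ` X = X"
    and coll: "\<forall>e>0. \<exists>s. \<forall>k. \<forall>x\<in>X. dist (ncomp fs (Suc s) k x) ((f^^k) x) < e"
    and vs1: "\<forall>k\<in>set vs. k \<ge> 1"
    and ms: "multi_sensitive X (ncomp fs 1) vs"
  shows "multi_sensitive X (\<lambda>n. f^^n) vs"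
proof -
  from ms obtain \<delta> where d0: "\<delta> > 0" and H: "\<forall>Us::'a set list. length Us = length vs \<longrightarrow>
        (\<forall>U\<in>set Us. openin (top_of_set X) U \<and> U \<noteq> {}) \<longrightarrow>
        (\<Inter>i<length vs. Nset (\<lambda>n. ncomp fs 1 (vs ! i * n)) (Us ! i) \<delta>) \<noteq> {}"
    unfolding multi_sensitive_def by blast
  have d4: "\<delta>/4 > 0" using d0 by simp
  obtain s where cs: "\<forall>k. \<forall>x\<in>X. dist (ncomp fs (Suc s) k x) ((f^^k) x) < \<delta>/4"
    using coll d4 by blast
  have fk: "\<And>k. continuous_on X (f^^k) \<and> (f^^k) ` X = X" using funpow_props[OF cf] by blast
  have nk: "\<And>k. continuous_on X (ncomp fs 1 k) \<and> (ncomp fs 1 k) ` X = X"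
    using ncomp_props[OF C1] by blast
  show ?thesis unfolding multi_sensitive_def
  proof (intro exI[of _ "\<delta>/2"] conjI allI impI)
    show "\<delta>/2 > 0" using d0 by simp
    fix Us :: "'a set list" assume len: "length Us = length vs"
      and op: "\<forall>U\<in>set Us. openin (top_of_set X) U \<and> U \<noteq> {}"
    let ?V = "\<lambda>i. X \<inter> (f^^(s*(vs!i - 1))) -` (Us!i)"
    let ?W = "\<lambda>i. X \<inter> (ncomp fs 1 s) -` ?V i"
    have "\<forall>i\<in>{..<length vs}. \<exists>V. openin (top_of_set X) V \<and> V \<noteq> {} \<and> V \<subseteq> ?W i
       \<and> (\<forall>j\<le>s * (vs!i). \<forall>u\<in>V. \<forall>w\<in>V. dist (ncomp fs 1 j u) (ncomp fs 1 j w) \<le> \<delta>)"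
    proof (intro ballI)
      fix i assume "i \<in> {..<length vs}"
      then have i: "i < length vs" by simp
      have "Us!i \<in> set Us" using len i by simp
      then have Ui: "openin (top_of_set X) (Us!i)" "Us!i \<noteq> {}" using op by blast+
      have UX: "Us!i \<subseteq> X" using Ui(1) openin_subset by fastforce
      let ?t = "s*(vs!i - 1)"
      have V1: "openin (top_of_set X) (?V i)"
      proof -
        have c1: "continuous_on X (f^^?t)" and c2: "(f^^?t) \<in> X \<rightarrow> X" using fk[of ?t] by auto
        show ?thesis by (rule continuous_openin_preimage[OF c1 c2 Ui(1)])
      qed
      have V2: "?V i \<noteq> {}"
      proof -
        obtain y where y: "y \<in> Us!i" using Ui(2) by blast
        then have "y \<in> (f^^?t) ` X" using UX fk[of ?t] by auto
        then obtain x where "x \<in> X" "(f^^?t) x = y" by auto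
        then show ?thesis using y by blast
      qed
      have W1: "openin (top_of_set X) (?W i)"
      proof -
        have c1: "continuous_on X (ncomp fs 1 s)" and c2: "(ncomp fs 1 s) \<in> X \<rightarrow> X" using nk[of s] by auto
        show ?thesis by (rule continuous_openin_preimage[OF c1 c2 V1])
      qed
      have W2: "?W i \<noteq> {}"
      proof -
        obtain y where y: "y \<in> ?V i" using V2 by blast
        then have "y \<in> (ncomp fs 1 s) ` X" using nk[of s] by auto
        then obtain x where "x \<in> X" "ncomp fs 1 s x = y" by auto
        then show ?thesis using y by blast
      qed
      have g: "\<forall>j\<le>s * (vs!i). continuous_on X (ncomp fs 1 j)" using nk by blast
      show "\<exists>V. openin (top_of_set X) V \<and> V \<noteq> {} \<and> V \<subseteq> ?W i
       \<and> (\<forall>j\<le>s * (vs!i). \<forall>u\<in>V. \<forall>w\<in>V. dist (ncomp fs 1 j u) (ncomp fs 1 j w) \<le> \<delta>)"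
        by (rule shrink[of "s * (vs!i)" X "\<lambda>j. ncomp fs 1 j", OF g W1 W2 d0])
    qed
    from bchoice[OF this] obtain Vf where Vf0: "\<forall>i\<in>{..<length vs}. openin (top_of_set X) (Vf i) \<and> Vf i \<noteq> {}
       \<and> Vf i \<subseteq> ?W i
       \<and> (\<forall>j\<le>s * (vs!i). \<forall>u\<in>Vf i. \<forall>w\<in>Vf i. dist (ncomp fs 1 j u) (ncomp fs 1 j w) \<le> \<delta>)" by blast
    have Vf: "\<And>i. i<length vs \<Longrightarrow> openin (top_of_set X) (Vf i) \<and> Vf i \<noteq> {}
       \<and> Vf i \<subseteq> ?W i
       \<and> (\<forall>j\<le>s * (vs!i). \<forall>u\<in>Vf i. \<forall>w\<in>Vf i. dist (ncomp fs 1 j u) (ncomp fs 1 j w) \<le> \<delta>)"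
      using Vf0 by simp
    define Us' where "Us' = map Vf [0..<length vs]"
    have l': "length Us' = length vs" by (simp add: Us'_def)
    have o': "\<forall>U\<in>set Us'. openin (top_of_set X) U \<and> U \<noteq> {}" using Vf by (auto simp: Us'_def)
    obtain n where n: "n \<in> (\<Inter>i<length vs. Nset (\<lambda>n. ncomp fs 1 (vs ! i * n)) (Us' ! i) \<delta>)"
      using H l' o' by blast
    have "n - s \<in> (\<Inter>i<length vs. Nset (\<lambda>n. f^^(vs ! i * n)) (Us ! i) (\<delta>/2))"
    proof (rule INT_I)
      fix i assume "i \<in> {..<length vs}"
      then have i: "i < length vs" by simp
      have Ui': "Us'!i = Vf i" using i by (simp add: Us'_def)
      have v1: "vs!i \<ge> 1" using vs1 i by simp
      have "n \<in> Nset (\<lambda>n. ncomp fs 1 (vs!i*n)) (Us'!i) \<delta>" using n i by blast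
      then have n1: "n \<ge> 1" and "\<exists>u\<in>Vf i. \<exists>w\<in>Vf i. dist (ncomp fs 1 (vs!i*n) u) (ncomp fs 1 (vs!i*n) w) > \<delta>"
        unfolding Nset_def using Ui' by auto
      then obtain u w where u: "u \<in> Vf i" and w: "w \<in> Vf i"
        and far: "dist (ncomp fs 1 (vs!i*n) u) (ncomp fs 1 (vs!i*n) w) > \<delta>" by blast
      have big: "vs!i*n > s * (vs!i)"
      proof (rule ccontr)
        assume "\<not> s * (vs!i) < vs!i*n"
        then have "dist (ncomp fs 1 (vs!i*n) u) (ncomp fs 1 (vs!i*n) w) \<le> \<delta>" using Vf[OF i] u w by auto
        then show False using far by linarith
      qed
      then have ns: "n > s" by (simp add: mult.commute)
      define m where "m = vs!i*n - s"
      define t where "t = s*(vs!i - 1)"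
      have "s \<le> s * (vs!i)" using v1 by simp
      then have "s < vs!i*n" using big by linarith
      then have vm: "vs!i*n = s + m" by (simp add: m_def)
      have mt: "m = vs!i*(n-s) + t"
      proof -
        obtain p where p: "vs!i = Suc p" using v1 by (cases "vs!i") auto
        obtain q where q: "n = s + q" using ns less_imp_add_positive by blast
        have "Suc p * (s + q) = s + (q + p * s + p * q)" by (simp add: algebra_simps)
        then have "m = q + p * s + p * q" unfolding m_def p q by simp
        moreover have "vs!i*(n-s) + t = q + p * s + p * q" unfolding t_def p q by (simp add: algebra_simps)
        ultimately show ?thesis by simp
      qed
      have ua: "ncomp fs 1 s u \<in> ?V i" and wa: "ncomp fs 1 s w \<in> ?V i" using Vf[OF i] u w by auto
      have aX: "ncomp fs 1 s u \<in> X" and bX: "ncomp fs 1 s w \<in> X" using ua wa by auto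
      have xU: "(f^^t) (ncomp fs 1 s u) \<in> Us!i" and yU: "(f^^t) (ncomp fs 1 s w) \<in> Us!i"
        using ua wa t_def by auto
      have e1: "(f^^m) (ncomp fs 1 s u) = (f^^(vs!i*(n-s))) ((f^^t) (ncomp fs 1 s u))"
        by (simp add: mt funpow_add)
      have e2: "(f^^m) (ncomp fs 1 s w) = (f^^(vs!i*(n-s))) ((f^^t) (ncomp fs 1 s w))"
        by (simp add: mt funpow_add)
      have e3: "ncomp fs 1 (vs!i*n) u = ncomp fs (Suc s) m (ncomp fs 1 s u)"
        using ncomp_add[of fs 1 s m] vm by simp
      have e4: "ncomp fs 1 (vs!i*n) w = ncomp fs (Suc s) m (ncomp fs 1 s w)"
        using ncomp_add[of fs 1 s m] vm by simp
      let ?P = "ncomp fs 1 (vs!i*n) u" and ?Q = "ncomp fs 1 (vs!i*n) w"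
      let ?A = "(f^^(vs!i*(n-s))) ((f^^t) (ncomp fs 1 s u))"
      let ?B = "(f^^(vs!i*(n-s))) ((f^^t) (ncomp fs 1 s w))"
      have "dist (ncomp fs (Suc s) m (ncomp fs 1 s u)) ((f^^m) (ncomp fs 1 s u)) < \<delta>/4" using cs aX by blast
      then have dA: "dist ?P ?A < \<delta>/4" using e1 e3 by simp
      have "dist (ncomp fs (Suc s) m (ncomp fs 1 s w)) ((f^^m) (ncomp fs 1 s w)) < \<delta>/4" using cs bX by blast
      then have dB: "dist ?Q ?B < \<delta>/4" using e2 e4 by simp
      have t1: "dist ?P ?Q \<le> dist ?P ?A + dist ?A ?Q" by (rule dist_triangle)
      have t2: "dist ?A ?Q \<le> dist ?A ?B + dist ?B ?Q" by (rule dist_triangle)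
      have "dist ?A ?B > \<delta>/2" using t1 t2 dA dB far by (simp add: dist_commute)
      moreover have "n - s \<ge> 1" using ns by simp
      ultimately show "n - s \<in> Nset (\<lambda>n. f^^(vs ! i * n)) (Us ! i) (\<delta>/2)"
        unfolding Nset_def using xU yU by auto
    qed
    then show "(\<Inter>i<length vs. Nset (\<lambda>n. f^^(vs ! i * n)) (Us ! i) (\<delta>/2)) \<noteq> {}"
      by blast
  qed
qed

theorem mainTheorem7:
  fixes X :: "'a::metric_space set" and fs :: "nat \<Rightarrow> 'a \<Rightarrow> 'a" and f :: "'a \<Rightarrow> 'a"
  assumes "compact X"
    and "\<And>n. n \<ge> 1 \<Longrightarrow> continuous_on X (fs n) \<and> fs n ` X = X"
    and "f ` X \<subseteq> X"
    and "\<forall>e>0. \<exists>N0. \<forall>n\<ge>N0. n \<ge> 1 \<longrightarrow> (\<forall>x\<in>X. dist (fs n x) (f x) < e)"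
    and "\<forall>e>0. \<exists>N0. \<forall>N\<ge>N0. N \<ge> 1 \<longrightarrow> (\<forall>k. supdist X (ncomp fs N k) (f ^^ k) < e)"
    and "feebly_open X fs"
  shows "(strongly_multi_sensitive X (ncomp fs 1) \<longleftrightarrow> strongly_multi_sensitive X (\<lambda>n. f ^^ n))
       \<and> (N_sensitive X (ncomp fs 1) \<longleftrightarrow> N_sensitive X (\<lambda>n. f ^^ n))"
proof -
  have C1: "\<forall>n\<ge>1. continuous_on X (fs n) \<and> fs n ` X = X" using assms(2) by blast
  have cf1: "continuous_on X f" by (rule f_cont[OF C1 assms(4)])
  have cf2: "f ` X = X" by (rule f_surj[OF assms(1) C1 assms(3) assms(4)])
  have coll: "\<forall>e>0. \<exists>s. \<forall>k. \<forall>x\<in>X. dist (ncomp fs (Suc s) k x) ((f^^k) x) < e"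
  proof (intro allI impI)
    fix e :: real assume e: "e > 0"
    then obtain N0 where N0: "\<forall>N\<ge>N0. N \<ge> 1 \<longrightarrow> (\<forall>k. supdist X (ncomp fs N k) (f ^^ k) < e)"
      using assms(5) by blast
    have "\<forall>k. supdist X (ncomp fs (Suc N0) k) (f ^^ k) < e" using N0 by simp
    then have "\<forall>k. \<forall>x\<in>X. dist (ncomp fs (Suc N0) k x) ((f^^k) x) < e"
      using coll_pt[OF assms(1) C1 cf2] by simp
    then show "\<exists>s. \<forall>k. \<forall>x\<in>X. dist (ncomp fs (Suc s) k x) ((f^^k) x) < e" by blast
  qed
  have eqv: "multi_sensitive X (ncomp fs 1) vs \<longleftrightarrow> multi_sensitive X (\<lambda>n. f ^^ n) vs"
    if "\<forall>k\<in>set vs. k \<ge> 1" for vs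
    using dir1[OF C1 cf1 cf2 coll assms(6)] dir2[OF C1 cf1 cf2 coll that] by blast
  have A: "strongly_multi_sensitive X (ncomp fs 1) \<longleftrightarrow> strongly_multi_sensitive X (\<lambda>n. f ^^ n)"
    unfolding strongly_multi_sensitive_def using eqv by blast
  have "\<forall>k\<in>set [1..<n+1]. k \<ge> 1" for n by auto
  then have B: "N_sensitive X (ncomp fs 1) \<longleftrightarrow> N_sensitive X (\<lambda>n. f ^^ n)"
    unfolding N_sensitive_def using eqv by blast
  show ?thesis using A B by blast
qed

end
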